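(* Let $\lambda_1\ge\lambda_2\ge 2$ and $h_1\ge h_2\ge2$ be integers, let $h_1\le m\le h_1+h_2+\lambda_2-3$, and set $m'=\lambda_1+\lambda_2+h_1+h_2-3-m$. Then $$\frac{\lambda_1-\lambda_2+1}{m-h_2+1}\binom{\lambda_1+h_1-2}{m-h_2}\binom{\lambda_2+h_1-3}{m-h_2}\binom{m-h_2}{m-h_1}\binom{\lambda_2+h_2-4}{h_2-2}\binom{\lambda_1+h_2-3}{h_2-2}\frac{1}{\binom{h_1-1}{h_2-2}}$$ $$=\frac{h_1-h_2+1}{m'-\lambda_2+1}\binom{h_1+\lambda_1-2}{m'-\lambda_2}\binom{h_2+\lambda_1-3}{m'-\lambda_2}\binom{m'-\lambda_2}{m'-\lambda_1}\binom{h_1+\lambda_2-3}{\lambda_2-2}\binom{h_2+\lambda_2-4}{\lambda_2-2}\frac{1}{\binom{\lambda_1-1}{\lambda_2-2}}.$$ *)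

theory Defs
  imports Complex_Main
begin

end

theory Submission
  imports Defs
begin

lemma swap45: "(p::real) * q * r * s * t * u * v = p * q * r * s * u * t * v"
  by (simp add: ac_simps)

lemma chf: "n = p + q \<Longrightarrow> real (n choose p) = fact n / (fact p * fact q)"
  by (simp add: binomial_fact)

definition F :: "nat\<Rightarrow>nat\<Rightarrow>nat\<Rightarrow>nat\<Rightarrow>nat\<Rightarrow>nat\<Rightarrow>real" where
 "F a b x y k j = real (x+1) * real (y+1) * fact (a+x+b+y+2) * fact (a+b+y+1) * fact (a+b) * fact (a+x+b+1)
   / (fact (y+k+1) * fact (x+j+1) * fact j * fact k * fact a * fact b * fact (a+x+1) * fact (b+y+1))"

lemma Fsym: "F b a y x j k = F a b x y k j"
  unfolding F_def by (simp add: ac_simps)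

lemma abs_id:
  fixes x1 Y fy FA fyk fxj FB fj fk Fab fb fa Fc fax Fby y1 :: real
  assumes "Y \<noteq> 0" "fy \<noteq> 0" "fyk \<noteq> 0" "fxj \<noteq> 0" "fj \<noteq> 0" "fk \<noteq> 0" "fb \<noteq> 0" "fa \<noteq> 0"
    "fax \<noteq> 0" "Fby \<noteq> 0" "y1 \<noteq> 0"
  shows "x1 / Y * (FA/(fyk*fxj)) * (FB/(fyk*fj)) * (fyk/(fk*fy)) * (Fab/(fb*fa)) * (Fc/(fb*fax)) * (1/(Fby/(fb*(y1*fy))))
    = x1*y1*FA*FB*Fab*Fc/((Y*fyk)*fxj*fj*fk*fa*fb*fax*Fby)"
  using assms by (simp add: field_simps)

lemma core: assumes "k + j = a + b + 1"
  shows "real (x+1) / real (y+k+1) * real ((a+x+b+y+2) choose (y+k)) * real ((a+b+y+1) choose (y+k))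
    * real ((y+k) choose k) * real ((a+b) choose b) * real ((a+x+b+1) choose b) * (1 / real ((b+y+1) choose b))
    = F a b x y k j"
proof -
  have e1: "real ((a+x+b+y+2) choose (y+k)) = fact (a+x+b+y+2) / (fact (y+k) * fact (x+j+1))"
    by (rule chf) (use assms in simp)
  have e2: "real ((a+b+y+1) choose (y+k)) = fact (a+b+y+1) / (fact (y+k) * fact j)"
    by (rule chf) (use assms in simp)
  have e3: "real ((y+k) choose k) = fact (y+k) / (fact k * fact y)"
    by (rule chf) simp
  have e4: "real ((a+b) choose b) = fact (a+b) / (fact b * fact a)"
    by (rule chf) simp
  have e5: "real ((a+x+b+1) choose b) = fact (a+x+b+1) / (fact b * fact (a+x+1))"
    by (rule chf) simp
  have e6: "real ((b+y+1) choose b) = fact (b+y+1) / (fact b * fact (y+1))"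
    by (rule chf) simp
  have f1: "(fact (y+k+1)::real) = real (y+k+1) * fact (y+k)"
    by (metis Suc_eq_plus1 fact_Suc of_nat_Suc)
  have f2: "(fact (y+1)::real) = real (y+1) * fact y"
    by (metis Suc_eq_plus1 fact_Suc of_nat_Suc)
  show ?thesis unfolding e1 e2 e3 e4 e5 e6 F_def f1 f2
    by (rule abs_id) auto
qed

theorem proposition4p2:
  fixes l1 l2 h1 h2 m m' :: int
  assumes "l1 \<ge> l2" and "l2 \<ge> 2" and "h1 \<ge> h2" and "h2 \<ge> 2"
    and "h1 \<le> m" and "m \<le> h1 + h2 + l2 - 3"
    and "m' = l1 + l2 + h1 + h2 - 3 - m"
  shows "real_of_int (l1 - l2 + 1) / real_of_int (m - h2 + 1)
           * real (nat (l1 + h1 - 2) choose nat (m - h2))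
           * real (nat (l2 + h1 - 3) choose nat (m - h2))
           * real (nat (m - h2) choose nat (m - h1))
           * real (nat (l2 + h2 - 4) choose nat (h2 - 2))
           * real (nat (l1 + h2 - 3) choose nat (h2 - 2))
           * (1 / real (nat (h1 - 1) choose nat (h2 - 2)))
       = real_of_int (h1 - h2 + 1) / real_of_int (m' - l2 + 1)
           * real (nat (h1 + l1 - 2) choose nat (m' - l2))
           * real (nat (h2 + l1 - 3) choose nat (m' - l2))
           * real (nat (m' - l2) choose nat (m' - l1))
           * real (nat (h1 + l2 - 3) choose nat (l2 - 2))
           * real (nat (h2 + l2 - 4) choose nat (l2 - 2))
           * (1 / real (nat (l1 - 1) choose nat (l2 - 2)))"
  proof -
  define a where "a = nat (l2 - 2)"
  define b where "b = nat (h2 - 2)"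
  define x where "x = nat (l1 - l2)"
  define y where "y = nat (h1 - h2)"
  define k where "k = nat (m - h1)"
  define j where "j = nat (h1 + h2 + l2 - 3 - m)"
  have kj: "k + j = a + b + 1" using assms unfolding a_def b_def k_def j_def by simp
  have n1: "nat (l1 + h1 - 2) = a+x+b+y+2" "nat (m - h2) = y+k" "nat (l2 + h1 - 3) = a+b+y+1"
    "nat (m - h1) = k" "nat (l2 + h2 - 4) = a+b" "nat (h2 - 2) = b" "nat (l1 + h2 - 3) = a+x+b+1"
    "nat (h1 - 1) = b+y+1" "real_of_int (l1 - l2 + 1) = real (x+1)" "real_of_int (m - h2 + 1) = real (y+k+1)"
    using assms unfolding a_def b_def x_def y_def k_def j_def by simp_all
  have n2: "nat (h1 + l1 - 2) = b+y+a+x+2" "nat (m' - l2) = x+j" "nat (h2 + l1 - 3) = b+a+x+1"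
    "nat (m' - l1) = j" "nat (h1 + l2 - 3) = b+y+a+1" "nat (l2 - 2) = a" "nat (h2 + l2 - 4) = b+a"
    "nat (l1 - 1) = a+x+1" "real_of_int (h1 - h2 + 1) = real (y+1)" "real_of_int (m' - l2 + 1) = real (x+j+1)"
    using assms unfolding a_def b_def x_def y_def k_def j_def by simp_all
  have kj2: "j + k = b + a + 1" using kj by simp
  note C1 = core[OF kj, of x y] and C2 = core[OF kj2, of y x]
  show ?thesis unfolding n1 n2 C1 Fsym[of b a y x j k, symmetric] C2[symmetric] 
    by (subst swap45) (rule refl)
qed

end
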